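(* Let $\varphi:\mathbb{R}\to\mathbb{R}$ be a diffeomorphism and let $\Sigma$ be a $\varphi$-stochastically complete $[\varphi,\vec e_3]$-minimal surface in $\mathbb{R}^3$ such that $|\dot\varphi(\mu(p))|\ge\xi$ for all $p$ outside a compact subset of $\Sigma$, for some constant $\xi>0$. Then, for every vector $\vec v\in\mathbb{R}^3$ with $\langle\vec v,\vec e_3\rangle>0$, $\Sigma$ is not contained in $\mathcal{H}^{\varphi}_{\vec v}=\{x\in\mathbb{R}^3:\ \operatorname{sgn}(\dot\varphi)\langle x,\vec v\rangle\le 0\}$.
   Context: Surfaces are connected, orientable, immersed in $\mathbb{R}^3$, without boundary, with unit normal $N$; $\{\vec e_1,\vec e_2,\vec e_3\}$ is the standard basis. For a surface $\Sigma$, $\mu(p)=\langle p,\vec e_3\rangle$ is the height function and $\eta=\langle N,\vec e_3\rangle$ the angle function. Given a smooth $\varphi:\mathbb{R}\to\mathbb{R}$, $\Sigma$ is called $[\varphi,\vec e_3]$-minimal if its mean curvature vector $\vec H$ (trace of the second fundamental form, equal to the Laplacian of the position vector) satisfies $\vec H=\dot\varphi(\mu)\,\eta\,N$; equivalently, writing $\vec H=-HN$, $H=-\dot\varphi(\mu)\eta$. On $\Sigma$ write $\varphi$ for $\varphi\circ\mu$, and let $\Delta^{\varphi}u=\Delta u+\langle\nabla\varphi,\nabla u\rangle$ be the drift Laplacian, where $\Delta,\nabla$ are the Laplacian and gradient of the induced metric. $\Sigma$ is $\varphi$-stochastically complete if for every $u\in C^2(\Sigma)$ with $u^*=\sup_\Sigma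 u<+\infty$ there is a sequence $p_n\in\Sigma$ with $u(p_n)>u^*-1/n$ and $\Delta^{\varphi}u(p_n)<1/n$ for all $n$ (completeness of the metric is not assumed). Since $\varphi$ is a diffeomorphism, $\dot\varphi$ has constant sign $\operatorname{sgn}(\dot\varphi)\in\{1,-1\}$. *)

theory Defs
  imports "HOL-Analysis.Analysis"
begin

definition pd1 :: "(real \<times> real \<Rightarrow> 'b::real_normed_vector) \<Rightarrow> real \<times> real \<Rightarrow> 'b" where
  "pd1 f x = frechet_derivative f (at x) (1, 0)"

definition pd2 :: "(real \<times> real \<Rightarrow> 'b::real_normed_vector) \<Rightarrow> real \<times> real \<Rightarrow> 'b" where
  "pd2 f x = frechet_derivative f (at x) (0, 1)"

fun Ck_on :: "nat \<Rightarrow> (real \<times> real \<Rightarrow> 'b::real_normed_vector) \<Rightarrow> (real \<times> real) set \<Rightarrow> bool" where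
  "Ck_on 0 f U = continuous_on U f"
| "Ck_on (Suc k) f U = (f differentiable_on U \<and> Ck_on k (pd1 f) U \<and> Ck_on k (pd2 f) U)"

definition smooth_on2 :: "(real \<times> real \<Rightarrow> 'b::real_normed_vector) \<Rightarrow> (real \<times> real) set \<Rightarrow> bool" where
  "smooth_on2 f U = (\<forall>k. Ck_on k f U)"

definition smooth_real :: "(real \<Rightarrow> real) \<Rightarrow> bool" where
  "smooth_real f = (\<forall>n x. (deriv ^^ n) f differentiable (at x))"

definition diffeo_real :: "(real \<Rightarrow> real) \<Rightarrow> bool" where
  "diffeo_real f = (bij f \<and> smooth_real f \<and> smooth_real (inv f))"

definition g11 :: "(real \<times> real \<Rightarrow> real^3) \<Rightarrow> real \<times> real \<Rightarrow> real" where
  "g11 Y x = pd1 Y x \<bullet> pd1 Y x"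
definition g12 :: "(real \<times> real \<Rightarrow> real^3) \<Rightarrow> real \<times> real \<Rightarrow> real" where
  "g12 Y x = pd1 Y x \<bullet> pd2 Y x"
definition g22 :: "(real \<times> real \<Rightarrow> real^3) \<Rightarrow> real \<times> real \<Rightarrow> real" where
  "g22 Y x = pd2 Y x \<bullet> pd2 Y x"
definition gdet :: "(real \<times> real \<Rightarrow> real^3) \<Rightarrow> real \<times> real \<Rightarrow> real" where
  "gdet Y x = g11 Y x * g22 Y x - (g12 Y x)\<^sup>2"

text \<open>Laplace--Beltrami operator of the induced metric, in local coordinates:
  (1/sqrt g) d_i (sqrt g g^{ij} d_j f); applies componentwise to vector-valued f.\<close>
definition lap :: "(real \<times> real \<Rightarrow> real^3) \<Rightarrow> (real \<times> real \<Rightarrow> 'b::real_normed_vector) \<Rightarrow> real \<times> real \<Rightarrow> 'b" where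
  "lap Y f x = (1 / sqrt (gdet Y x)) *\<^sub>R
     (pd1 (\<lambda>y. (sqrt (gdet Y y) / gdet Y y) *\<^sub>R (g22 Y y *\<^sub>R pd1 f y - g12 Y y *\<^sub>R pd2 f y)) x
    + pd2 (\<lambda>y. (sqrt (gdet Y y) / gdet Y y) *\<^sub>R (g11 Y y *\<^sub>R pd2 f y - g12 Y y *\<^sub>R pd1 f y)) x)"

text \<open>Inner product of gradients <grad a, grad b> = g^{ij} d_i a d_j b.\<close>
definition grad_inner :: "(real \<times> real \<Rightarrow> real^3) \<Rightarrow> (real \<times> real \<Rightarrow> real) \<Rightarrow> (real \<times> real \<Rightarrow> real) \<Rightarrow> real \<times> real \<Rightarrow> real" where
  "grad_inner Y a b x = (g22 Y x * pd1 a x * pd1 b x - g12 Y x * (pd1 a x * pd2 b x + pd2 a x * pd1 b x)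
      + g11 Y x * pd2 a x * pd2 b x) / gdet Y x"

text \<open>A surface is a topological space M with an immersion X : M \<rightarrow> R^3. A (regular) chart is a
 homeomorphism psi of an open U \<subseteq> R^2 onto an open subset of M such that X \<circ> psi is a smooth
 immersion. (The smooth structure of M is the one induced by X.)\<close>
definition is_chart :: "'a topology \<Rightarrow> ('a \<Rightarrow> real^3) \<Rightarrow> (real \<times> real) set \<Rightarrow> (real \<times> real \<Rightarrow> 'a) \<Rightarrow> bool" where
  "is_chart M X U \<psi> =
     (open U \<and> openin M (\<psi> ` U) \<and>
      homeomorphic_map (top_of_set U) (subtopology M (\<psi> ` U)) \<psi> \<and>
      smooth_on2 (X \<circ> \<psi>) U \<and> (\<forall>x\<in>U. gdet (X \<circ> \<psi>) x > 0))"

text \<open>Connected, orientable (via a global continuous unit normal N), immersed surface without boundary.\<close>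
definition immersed_surface :: "'a topology \<Rightarrow> ('a \<Rightarrow> real^3) \<Rightarrow> ('a \<Rightarrow> real^3) \<Rightarrow> bool" where
  "immersed_surface M X N =
     (topspace M \<noteq> {} \<and> connected_space M \<and> Hausdorff_space M \<and>
      (\<forall>p\<in>topspace M. \<exists>U \<psi> x. is_chart M X U \<psi> \<and> x \<in> U \<and> \<psi> x = p) \<and>
      continuous_map M euclidean N \<and> (\<forall>p\<in>topspace M. norm (N p) = 1) \<and>
      (\<forall>U \<psi> x. is_chart M X U \<psi> \<and> x \<in> U \<longrightarrow>
          N (\<psi> x) \<bullet> pd1 (X \<circ> \<psi>) x = 0 \<and> N (\<psi> x) \<bullet> pd2 (X \<circ> \<psi>) x = 0))"

definition e3 :: "real^3" where "e3 = axis 3 1"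

definition height :: "('a \<Rightarrow> real^3) \<Rightarrow> 'a \<Rightarrow> real" where
  "height X p = X p \<bullet> e3"

definition angle_fun :: "('a \<Rightarrow> real^3) \<Rightarrow> 'a \<Rightarrow> real" where
  "angle_fun N p = N p \<bullet> e3"

text \<open>[phi,e3]-minimal: mean curvature vector (= Laplacian of the position vector) equals
 phi'(mu) eta N.\<close>
definition phi_minimal :: "(real \<Rightarrow> real) \<Rightarrow> 'a topology \<Rightarrow> ('a \<Rightarrow> real^3) \<Rightarrow> ('a \<Rightarrow> real^3) \<Rightarrow> bool" where
  "phi_minimal \<phi> M X N =
     (\<forall>U \<psi> x. is_chart M X U \<psi> \<and> x \<in> U \<longrightarrow>
        lap (X \<circ> \<psi>) (X \<circ> \<psi>) x = (deriv \<phi> (height X (\<psi> x)) * angle_fun N (\<psi> x)) *\<^sub>R N (\<psi> x))"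

definition C2_surface :: "'a topology \<Rightarrow> ('a \<Rightarrow> real^3) \<Rightarrow> ('a \<Rightarrow> real) \<Rightarrow> bool" where
  "C2_surface M X u = (\<forall>U \<psi>. is_chart M X U \<psi> \<longrightarrow> Ck_on 2 (u \<circ> \<psi>) U)"

definition drift_lap :: "(real \<Rightarrow> real) \<Rightarrow> ('a \<Rightarrow> real^3) \<Rightarrow> (real \<times> real \<Rightarrow> 'a) \<Rightarrow> ('a \<Rightarrow> real) \<Rightarrow> real \<times> real \<Rightarrow> real" where
  "drift_lap \<phi> X \<psi> u x =
     lap (X \<circ> \<psi>) (u \<circ> \<psi>) x + grad_inner (X \<circ> \<psi>) (\<phi> \<circ> height X \<circ> \<psi>) (u \<circ> \<psi>) x"

text \<open>phi-stochastic completeness (the drift Laplacian at a point is chart independent; we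
 require the bound in every chart through the point).\<close>
definition phi_stoch_complete :: "(real \<Rightarrow> real) \<Rightarrow> 'a topology \<Rightarrow> ('a \<Rightarrow> real^3) \<Rightarrow> bool" where
  "phi_stoch_complete \<phi> M X =
     (\<forall>u. C2_surface M X u \<and> bdd_above (u ` topspace M) \<longrightarrow>
        (\<exists>p :: nat \<Rightarrow> 'a. \<forall>n\<ge>1. p n \<in> topspace M \<and>
            u (p n) > (SUP q\<in>topspace M. u q) - 1 / real n \<and>
            (\<forall>U \<psi> x. is_chart M X U \<psi> \<and> x \<in> U \<and> \<psi> x = p n \<longrightarrow> drift_lap \<phi> X \<psi> u x < 1 / real n)))"

text \<open>sgn(phi'): constant since phi is a diffeomorphism of R.\<close>
definition sgn_dphi :: "(real \<Rightarrow> real) \<Rightarrow> real" where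
  "sgn_dphi \<phi> = sgn (deriv \<phi> 0)"

end

theory Submission
  imports Defs "HOL-Analysis.Cross3"
begin

lemma fd_local:
  assumes "open U" "x \<in> U" "\<And>y. y \<in> U \<Longrightarrow> f y = g y"
  shows "frechet_derivative f (at x) = frechet_derivative g (at x)"
proof -
  have "\<And>D. (f has_derivative D) (at x) \<longleftrightarrow> (g has_derivative D) (at x)"
    using has_derivative_transform_within_open[OF _ assms(1,2)] assms(3) by metis
  then show ?thesis unfolding frechet_derivative_def by simp
qed

lemma pd_local:
  assumes "open U" "x \<in> U" "\<And>y. y \<in> U \<Longrightarrow> f y = g y"
  shows "pd1 f x = pd1 g x" "pd2 f x = pd2 g x"
  using fd_local[OF assms] unfolding pd1_def pd2_def by simp_all

lemma fd_lin:
  fixes f :: "real \<times> real \<Rightarrow> real^3"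
  assumes "f differentiable (at y)"
  shows "frechet_derivative (\<lambda>z. s * (f z \<bullet> v)) (at y) = (\<lambda>h. s * (frechet_derivative f (at y) h \<bullet> v))"
proof -
  have "(f has_derivative frechet_derivative f (at y)) (at y)"
    using assms frechet_derivative_works by blast
  then have "((\<lambda>z. s * (f z \<bullet> v)) has_derivative (\<lambda>h. s * (frechet_derivative f (at y) h \<bullet> v))) (at y)"
    by (auto intro!: derivative_eq_intros)
  then show ?thesis using frechet_derivative_at by metis
qed

lemma pd_lin:
  fixes f :: "real \<times> real \<Rightarrow> real^3"
  assumes "f differentiable (at y)"
  shows "pd1 (\<lambda>z. s * (f z \<bullet> v)) y = s * (pd1 f y \<bullet> v)" "pd2 (\<lambda>z. s * (f z \<bullet> v)) y = s * (pd2 f y \<bullet> v)"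
  using fd_lin[OF assms] unfolding pd1_def pd2_def by simp_all

lemma Ck_cong:
  assumes "open U" "Ck_on k f U" "\<And>y. y \<in> U \<Longrightarrow> f y = g y"
  shows "Ck_on k g U"
  using assms(2,3)
proof (induction k arbitrary: f g)
  case 0
  then show ?case using continuous_on_cong by (metis Ck_on.simps(1))
next
  case (Suc k)
  have d: "g differentiable_on U"
    unfolding differentiable_on_def
  proof
    fix x assume x: "x \<in> U"
    then have "f differentiable (at x)" using Suc.prems(1) assms(1)
      by (simp add: differentiable_on_eq_differentiable_at)
    then obtain D where "(f has_derivative D) (at x)" unfolding differentiable_def by blast
    then have "(g has_derivative D) (at x)"
      using has_derivative_transform_within_open[OF _ assms(1) x] Suc.prems(2) by metis
    then show "g differentiable (at x within U)" unfolding differentiable_def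
      using has_derivative_at_withinI by blast
  qed
  have e1: "\<And>y. y \<in> U \<Longrightarrow> pd1 f y = pd1 g y" using pd_local(1)[OF assms(1)] Suc.prems(2) by metis
  have e2: "\<And>y. y \<in> U \<Longrightarrow> pd2 f y = pd2 g y" using pd_local(2)[OF assms(1)] Suc.prems(2) by metis
  have "Ck_on k (pd1 g) U" using Suc.IH[of "pd1 f" "pd1 g"] Suc.prems e1 by simp
  moreover have "Ck_on k (pd2 g) U" using Suc.IH[of "pd2 f" "pd2 g"] Suc.prems e2 by simp
  ultimately show ?case using d by simp
qed

lemma Ck_lin:
  fixes f :: "real \<times> real \<Rightarrow> real^3"
  assumes "open U" "Ck_on k f U"
  shows "Ck_on k (\<lambda>z. s * (f z \<bullet> v)) U"
  using assms(2)
proof (induction k arbitrary: f)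
  case 0
  then show ?case by (auto intro!: continuous_intros)
next
  case (Suc k)
  have fd: "f differentiable_on U" using Suc.prems by simp
  then have fa: "\<And>y. y \<in> U \<Longrightarrow> f differentiable (at y)" using assms(1)
    by (simp add: differentiable_on_eq_differentiable_at)
  have d: "(\<lambda>z. s * (f z \<bullet> v)) differentiable_on U"
    using fd unfolding differentiable_on_def by (auto intro!: differentiable_mult differentiable_inner)
  have "Ck_on k (pd1 (\<lambda>z. s * (f z \<bullet> v))) U"
    apply (rule Ck_cong[OF assms(1) Suc.IH[of "pd1 f"]])
    using Suc.prems pd_lin(1)[OF fa] by auto
  moreover have "Ck_on k (pd2 (\<lambda>z. s * (f z \<bullet> v))) U"
    apply (rule Ck_cong[OF assms(1) Suc.IH[of "pd2 f"]])
    using Suc.prems pd_lin(2)[OF fa] by auto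
  ultimately show ?case using d by simp
qed


lemma Ck2_facts:
  assumes "open U" "Ck_on 2 Y U" "x \<in> U"
  shows "Y differentiable (at x)" "pd1 Y differentiable (at x)" "pd2 Y differentiable (at x)"
  using assms by (auto simp: numeral_2_eq_2 differentiable_on_eq_differentiable_at)

lemma lap_lin:
  fixes Y :: "real \<times> real \<Rightarrow> real^3"
  assumes U: "open U" and x: "x \<in> U" and C: "Ck_on 2 Y U" and G: "gdet Y x > 0"
  shows "lap Y (\<lambda>z. s * (Y z \<bullet> v)) x = s * (lap Y Y x \<bullet> v)"
proof -
  define W1 where "W1 = (\<lambda>y. (sqrt (gdet Y y) / gdet Y y) *\<^sub>R (g22 Y y *\<^sub>R pd1 Y y - g12 Y y *\<^sub>R pd2 Y y))"
  define W2 where "W2 = (\<lambda>y. (sqrt (gdet Y y) / gdet Y y) *\<^sub>R (g11 Y y *\<^sub>R pd2 Y y - g12 Y y *\<^sub>R pd1 Y y))"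
  have Yd: "\<And>y. y \<in> U \<Longrightarrow> Y differentiable (at y)" using Ck2_facts[OF U C] by blast
  have p1: "pd1 Y differentiable (at x)" and p2: "pd2 Y differentiable (at x)" using Ck2_facts[OF U C x] by auto
  have gd: "(\<lambda>y. gdet Y y) differentiable (at x)"
    unfolding gdet_def g11_def g22_def g12_def using p1 p2 by (auto intro!: derivative_intros)
  have sq: "sqrt differentiable (at (gdet Y x))"
    using DERIV_real_sqrt[OF G] unfolding has_field_derivative_def differentiable_def by blast
  have sgd: "(\<lambda>y. sqrt (gdet Y y)) differentiable (at x)"
    using differentiable_compose[OF sq gd] .
  have W1d: "W1 differentiable (at x)" unfolding W1_def
    apply (intro differentiable_scaleR differentiable_divide differentiable_diff sgd gd)
    using p1 p2 G by (auto simp: g22_def g12_def)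
  have W2d: "W2 differentiable (at x)" unfolding W2_def
    apply (intro differentiable_scaleR differentiable_divide differentiable_diff sgd gd)
    using p1 p2 G by (auto simp: g11_def g12_def)
  have e1: "pd1 (\<lambda>y. (sqrt (gdet Y y) / gdet Y y) *\<^sub>R (g22 Y y *\<^sub>R pd1 (\<lambda>z. s * (Y z \<bullet> v)) y - g12 Y y *\<^sub>R pd2 (\<lambda>z. s * (Y z \<bullet> v)) y)) x
     = pd1 (\<lambda>y. s * (W1 y \<bullet> v)) x"
    apply (rule pd_local(1)[OF U x])
    using pd_lin[OF Yd] by (simp add: W1_def inner_diff_left algebra_simps)
  have e2: "pd2 (\<lambda>y. (sqrt (gdet Y y) / gdet Y y) *\<^sub>R (g11 Y y *\<^sub>R pd2 (\<lambda>z. s * (Y z \<bullet> v)) y - g12 Y y *\<^sub>R pd1 (\<lambda>z. s * (Y z \<bullet> v)) y)) x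
     = pd2 (\<lambda>y. s * (W2 y \<bullet> v)) x"
    apply (rule pd_local(2)[OF U x])
    using pd_lin[OF Yd] by (simp add: W2_def inner_diff_left algebra_simps)
  have LY: "lap Y Y x = (1 / sqrt (gdet Y x)) *\<^sub>R (pd1 W1 x + pd2 W2 x)"
    unfolding lap_def W1_def W2_def by (rule refl)
  show ?thesis
    unfolding LY unfolding lap_def e1 e2 pd_lin(1)[OF W1d] pd_lin(2)[OF W2d]
    by (simp add: inner_add_left algebra_simps)
qed

lemma grad_lin:
  fixes Y :: "real \<times> real \<Rightarrow> real^3"
  assumes U: "open U" and x: "x \<in> U" and C: "Ck_on 2 Y U" and ph: "\<And>t. \<phi> differentiable (at t)"
  shows "grad_inner Y (\<lambda>y. \<phi> (Y y \<bullet> e)) (\<lambda>z. s * (Y z \<bullet> v)) x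
    = deriv \<phi> (Y x \<bullet> e) * s * ((g22 Y x * (pd1 Y x \<bullet> e) * (pd1 Y x \<bullet> v)
        - g12 Y x * ((pd1 Y x \<bullet> e) * (pd2 Y x \<bullet> v) + (pd2 Y x \<bullet> e) * (pd1 Y x \<bullet> v))
        + g11 Y x * (pd2 Y x \<bullet> e) * (pd2 Y x \<bullet> v)) / gdet Y x)"
proof -
  have Yd: "Y differentiable (at x)" using Ck2_facts[OF U C x] by blast
  have D: "(\<phi> has_real_derivative deriv \<phi> (Y x \<bullet> e)) (at (Y x \<bullet> e))"
    using ph DERIV_deriv_iff_real_differentiable by blast
  have "(Y has_derivative frechet_derivative Y (at x)) (at x)"
    using Yd frechet_derivative_works by blast
  then have "((\<lambda>y. Y y \<bullet> e) has_derivative (\<lambda>h. frechet_derivative Y (at x) h \<bullet> e)) (at x)"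
    by (auto intro!: derivative_eq_intros)
  from DERIV_compose_FDERIV[OF D this]
  have "frechet_derivative (\<lambda>y. \<phi> (Y y \<bullet> e)) (at x) = (\<lambda>h. (frechet_derivative Y (at x) h \<bullet> e) * deriv \<phi> (Y x \<bullet> e))"
    using frechet_derivative_at by metis
  then have a1: "pd1 (\<lambda>y. \<phi> (Y y \<bullet> e)) x = (pd1 Y x \<bullet> e) * deriv \<phi> (Y x \<bullet> e)"
    and a2: "pd2 (\<lambda>y. \<phi> (Y y \<bullet> e)) x = (pd2 Y x \<bullet> e) * deriv \<phi> (Y x \<bullet> e)"
    unfolding pd1_def pd2_def by simp_all
  show ?thesis unfolding grad_inner_def a1 a2 pd_lin[OF Yd]
    by (simp add: algebra_simps add_divide_distrib diff_divide_distrib)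
qed


lemma decomp:
  fixes p q w :: "real^3"
  shows "((p\<bullet>p)*(q\<bullet>q) - (p\<bullet>q)^2) *\<^sub>R w =
    ((q\<bullet>q)*(p\<bullet>w) - (p\<bullet>q)*(q\<bullet>w)) *\<^sub>R p + ((p\<bullet>p)*(q\<bullet>w) - (p\<bullet>q)*(p\<bullet>w)) *\<^sub>R q
    + (cross3 p q \<bullet> w) *\<^sub>R cross3 p q"
  unfolding vec_eq_iff forall_3
  by (simp add: cross3_def inner_vec_def sum_3 vector_def power2_eq_square; algebra)

lemma tang:
  fixes p q N e v :: "real^3"
  assumes Np: "N \<bullet> p = 0" and Nq: "N \<bullet> q = 0" and NN: "N \<bullet> N = 1"
    and G: "(p\<bullet>p)*(q\<bullet>q) - (p\<bullet>q)^2 > 0"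
  shows "((q\<bullet>q) * (p\<bullet>e) * (p\<bullet>v) - (p\<bullet>q) * ((p\<bullet>e) * (q\<bullet>v) + (q\<bullet>e) * (p\<bullet>v))
      + (p\<bullet>p) * (q\<bullet>e) * (q\<bullet>v)) / ((p\<bullet>p)*(q\<bullet>q) - (p\<bullet>q)^2) = e \<bullet> v - (N \<bullet> e) * (N \<bullet> v)"
proof -
  define G where "G = (p\<bullet>p)*(q\<bullet>q) - (p\<bullet>q)^2"
  define Q where "Q = cross3 p q"
  have pN: "p \<bullet> N = 0" "q \<bullet> N = 0" using Np Nq by (simp_all add: inner_commute)
  have dN: "G *\<^sub>R N = (Q \<bullet> N) *\<^sub>R Q" using decomp[of p q N] unfolding G_def Q_def pN by simp
  have h1: "G = (Q \<bullet> N)^2"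
    using arg_cong[OF dN, of "\<lambda>w. w \<bullet> N"] NN by (simp add: power2_eq_square inner_commute)
  have h2: "G * (N \<bullet> e) = (Q \<bullet> N) * (Q \<bullet> e)" "G * (N \<bullet> v) = (Q \<bullet> N) * (Q \<bullet> v)"
    using arg_cong[OF dN, of "\<lambda>w. w \<bullet> e"] arg_cong[OF dN, of "\<lambda>w. w \<bullet> v"] by simp_all
  have "G * (G * ((N \<bullet> e) * (N \<bullet> v))) = G * ((Q \<bullet> e) * (Q \<bullet> v))"
  proof -
    have "G * (G * ((N \<bullet> e) * (N \<bullet> v))) = (G * (N \<bullet> e)) * (G * (N \<bullet> v))" by (simp add: algebra_simps)
    also have "\<dots> = (Q \<bullet> N)^2 * ((Q \<bullet> e) * (Q \<bullet> v))" unfolding h2 by (simp add: power2_eq_square algebra_simps)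
    finally show ?thesis using h1 by simp
  qed
  then have h3: "G * ((N \<bullet> e) * (N \<bullet> v)) = (Q \<bullet> e) * (Q \<bullet> v)" using G G_def by simp
  have h4: "G * (e \<bullet> v) = ((q\<bullet>q) * (p\<bullet>e) * (p\<bullet>v) - (p\<bullet>q) * ((p\<bullet>e) * (q\<bullet>v) + (q\<bullet>e) * (p\<bullet>v))
      + (p\<bullet>p) * (q\<bullet>e) * (q\<bullet>v)) + (Q \<bullet> e) * (Q \<bullet> v)"
    using arg_cong[OF decomp[of p q e], of "\<lambda>w. w \<bullet> v"] unfolding G_def Q_def
    by (simp add: inner_add_left algebra_simps)
  show ?thesis using G unfolding G_def[symmetric]
    by (simp add: field_simps h4 h3[symmetric] algebra_simps)
qed

lemma dphi_nz:
  assumes "diffeo_real \<phi>"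
  shows "deriv \<phi> t \<noteq> 0"
proof -
  have b: "bij \<phi>" and s1: "smooth_real \<phi>" and s2: "smooth_real (inv \<phi>)"
    using assms unfolding diffeo_real_def by auto
  have d1: "\<phi> differentiable (at t)" using s1 unfolding smooth_real_def by (metis funpow_0)
  have d2: "inv \<phi> differentiable (at (\<phi> t))" using s2 unfolding smooth_real_def by (metis funpow_0)
  have it: "inv \<phi> (\<phi> t) = t" using b by (simp add: bij_is_inj)
  have D1: "DERIV \<phi> (inv \<phi> (\<phi> t)) :> deriv \<phi> t" using d1 it DERIV_deriv_iff_real_differentiable by metis
  have D2: "DERIV (inv \<phi>) (\<phi> t) :> deriv (inv \<phi>) (\<phi> t)" using d2 DERIV_deriv_iff_real_differentiable by metis
  have "DERIV (\<phi> \<circ> inv \<phi>) (\<phi> t) :> deriv \<phi> t * deriv (inv \<phi>) (\<phi> t)"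
    using DERIV_chain[OF D1 D2] .
  moreover have "\<phi> \<circ> inv \<phi> = id" using b by (auto simp: fun_eq_iff bij_def surj_f_inv_f)
  ultimately have "DERIV id (\<phi> t) :> deriv \<phi> t * deriv (inv \<phi>) (\<phi> t)" by simp
  moreover have "DERIV id (\<phi> t) :> 1" by (simp add: DERIV_ident id_def)
  ultimately have "deriv \<phi> t * deriv (inv \<phi>) (\<phi> t) = 1" using DERIV_unique by blast
  then show ?thesis by auto
qed

lemma dphi_cont:
  assumes "diffeo_real \<phi>"
  shows "continuous_on UNIV (deriv \<phi>)"
proof -
  have "\<And>x. (deriv ^^ 1) \<phi> differentiable (at x)" using assms unfolding diffeo_real_def smooth_real_def
    by blast
  then have "\<And>x. deriv \<phi> differentiable (at x)" by simp
  then show ?thesis using differentiable_imp_continuous_within continuous_at_imp_continuous_on by blast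
qed

lemma sign_const:
  fixes f :: "real \<Rightarrow> real"
  assumes c: "continuous_on UNIV f" and nz: "\<And>t. f t \<noteq> 0"
  shows "sgn (f 0) * f t = \<bar>f t\<bar>"
proof (rule ccontr)
  assume a: "sgn (f 0) * f t \<noteq> \<bar>f t\<bar>"
  have cc: "\<And>a b. continuous_on {a..b} f" using c continuous_on_subset by blast
  have "(f 0 > 0 \<and> f t < 0) \<or> (f 0 < 0 \<and> f t > 0)" using a nz[of 0] nz[of t]
    by (cases "f 0 > 0"; cases "f t > 0") (auto simp: sgn_if)
  then obtain z where "f z = 0"
  proof
    assume h: "f 0 > 0 \<and> f t < 0"
    show thesis
    proof (cases "0 \<le> t")
      case True then show ?thesis using IVT2'[of f t 0 0, OF _ _ True cc] h that by force
    next
      case False then show ?thesis using IVT'[of f t 0 0, OF _ _ _ cc] h that by force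
    qed
  next
    assume h: "f 0 < 0 \<and> f t > 0"
    show thesis
    proof (cases "0 \<le> t")
      case True then show ?thesis using IVT'[of f 0 0 t, OF _ _ True cc] h that by force
    next
      case False then show ?thesis using IVT2'[of f 0 0 t, OF _ _ _ cc] h that by force
    qed
  qed
  then show False using nz by blast
qed


lemma X_cont:
  assumes S: "immersed_surface M X N"
  shows "continuous_map M euclidean X"
proof -
  let ?I = "{(U, \<psi>). is_chart M X U \<psi>}"
  show ?thesis
  proof (rule pasting_lemma[where I = ?I and T = "\<lambda>(U, \<psi>). \<psi> ` U" and f = "\<lambda>_. X"])
    fix i assume "i \<in> ?I"
    then obtain U \<psi> where i: "i = (U, \<psi>)" and c: "is_chart M X U \<psi>" by auto
    then show "openin M (case i of (U, \<psi>) \<Rightarrow> \<psi> ` U)" unfolding is_chart_def by simp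
    from c have hm: "homeomorphic_map (top_of_set U) (subtopology M (\<psi> ` U)) \<psi>"
      and sm: "smooth_on2 (X \<circ> \<psi>) U" unfolding is_chart_def by auto
    then obtain g where g: "homeomorphic_maps (top_of_set U) (subtopology M (\<psi> ` U)) \<psi> g"
      using homeomorphic_map_maps by blast
    have cg: "continuous_map (subtopology M (\<psi> ` U)) (top_of_set U) g"
      and fg: "\<And>y. y \<in> topspace (subtopology M (\<psi> ` U)) \<Longrightarrow> \<psi> (g y) = y"
      using g unfolding homeomorphic_maps_def by auto
    have "continuous_on U (X \<circ> \<psi>)" using sm unfolding smooth_on2_def by (metis Ck_on.simps(1))
    then have "continuous_map (top_of_set U) euclidean (X \<circ> \<psi>)" by simp
    then have "continuous_map (subtopology M (\<psi> ` U)) euclidean ((X \<circ> \<psi>) \<circ> g)"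
      using continuous_map_compose[OF cg] by blast
    then have "continuous_map (subtopology M (\<psi> ` U)) euclidean X"
      by (rule continuous_map_eq) (simp add: fg)
    then show "continuous_map (subtopology M (case i of (U, \<psi>) \<Rightarrow> \<psi> ` U)) euclidean X"
      using i by simp
  next
    fix x assume "x \<in> topspace M"
    then obtain U \<psi> y where "is_chart M X U \<psi>" "y \<in> U" "\<psi> y = x"
      using S unfolding immersed_surface_def by blast
    then show "\<exists>j. j \<in> ?I \<and> x \<in> (case j of (U, \<psi>) \<Rightarrow> \<psi> ` U) \<and> X x = X x"
      by (intro exI[of _ "(U, \<psi>)"]) auto
  qed auto
qed

lemma drift_val:
  assumes ph: "diffeo_real \<phi>" and S: "immersed_surface M X N" and mn: "phi_minimal \<phi> M X N"
    and c: "is_chart M X U \<psi>" and x: "x \<in> U"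
  shows "drift_lap \<phi> X \<psi> (\<lambda>p. s * (X p \<bullet> v)) x = s * deriv \<phi> (height X (\<psi> x)) * (e3 \<bullet> v)"
proof -
  let ?Y = "X \<circ> \<psi>"
  have U: "open U" and sm: "smooth_on2 ?Y U" and G: "gdet ?Y x > 0"
    using c x unfolding is_chart_def by auto
  have C: "Ck_on 2 ?Y U" using sm unfolding smooth_on2_def by blast
  have phd: "\<And>t. \<phi> differentiable (at t)" using ph unfolding diffeo_real_def smooth_real_def
    by (metis funpow_0)
  have e1: "(\<lambda>p. s * (X p \<bullet> v)) \<circ> \<psi> = (\<lambda>z. s * (?Y z \<bullet> v))" by (simp add: o_def)
  have e2: "\<phi> \<circ> height X \<circ> \<psi> = (\<lambda>y. \<phi> (?Y y \<bullet> e3))" by (simp add: o_def height_def)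
  have hx: "height X (\<psi> x) = ?Y x \<bullet> e3" by (simp add: height_def)
  have L: "lap ?Y ?Y x = (deriv \<phi> (height X (\<psi> x)) * angle_fun N (\<psi> x)) *\<^sub>R N (\<psi> x)"
    using mn c x unfolding phi_minimal_def by blast
  have Np: "N (\<psi> x) \<bullet> pd1 ?Y x = 0" "N (\<psi> x) \<bullet> pd2 ?Y x = 0"
    using S c x unfolding immersed_surface_def by blast+
  have "\<psi> x \<in> topspace M"
    using c x unfolding is_chart_def by (meson image_eqI openin_subset subsetD)
  then have "norm (N (\<psi> x)) = 1" using S unfolding immersed_surface_def by blast
  then have NN: "N (\<psi> x) \<bullet> N (\<psi> x) = 1" by (simp add: norm_eq_1)
  have Gx: "pd1 ?Y x \<bullet> pd1 ?Y x * (pd2 ?Y x \<bullet> pd2 ?Y x) - (pd1 ?Y x \<bullet> pd2 ?Y x)\<^sup>2 > 0"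
    using G unfolding gdet_def g11_def g22_def g12_def .
  note T = tang[OF Np NN Gx, of e3 v]
  show ?thesis
    unfolding drift_lap_def e1 e2 lap_lin[OF U x C G] grad_lin[OF U x C phd] L
    unfolding gdet_def g11_def g22_def g12_def T
    by (simp add: hx angle_fun_def algebra_simps)
qed

theorem theoremC:
  fixes \<phi> :: "real \<Rightarrow> real" and M :: "'a topology" and X N :: "'a \<Rightarrow> real^3"
    and K :: "'a set" and \<xi> :: real
  assumes "diffeo_real \<phi>"
    and "immersed_surface M X N"
    and "phi_minimal \<phi> M X N"
    and "phi_stoch_complete \<phi> M X"
    and "compactin M K" and "\<xi> > 0"
    and "\<forall>p\<in>topspace M - K. \<bar>deriv \<phi> (height X p)\<bar> \<ge> \<xi>"
  shows "\<forall>v::real^3. v \<bullet> e3 > 0 \<longrightarrow>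
           \<not> (\<forall>p\<in>topspace M. sgn_dphi \<phi> * (X p \<bullet> v) \<le> 0)"
proof (intro allI impI notI)
  fix v :: "real^3"
  assume ve: "v \<bullet> e3 > 0" and H: "\<forall>p\<in>topspace M. sgn_dphi \<phi> * (X p \<bullet> v) \<le> 0"
  note ph = assms(1) and S = assms(2) and mn = assms(3) and sc = assms(4)
  define s where "s = sgn_dphi \<phi>"
  have sabs: "\<And>t. s * deriv \<phi> t = \<bar>deriv \<phi> t\<bar>"
    unfolding s_def sgn_dphi_def using sign_const[OF dphi_cont[OF ph] dphi_nz[OF ph]] by blast
  obtain c where c0: "c > 0" and cb: "\<And>p. p \<in> topspace M \<Longrightarrow> \<bar>deriv \<phi> (height X p)\<bar> \<ge> c"
  proof (cases "K = {}")
    case True then show ?thesis using that[of \<xi>] assms(6,7) by auto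
  next
    case False
    have hc: "continuous_map M euclidean (\<lambda>p. \<bar>deriv \<phi> (height X p)\<bar>)"
    proof -
      have "continuous_on UNIV (\<lambda>w::real^3. w \<bullet> e3)" by (intro continuous_intros)
      from continuous_on_compose2[OF dphi_cont[OF ph] this]
      have "continuous_on UNIV (\<lambda>w::real^3. deriv \<phi> (w \<bullet> e3))" by simp
      then have "continuous_on UNIV (\<lambda>w::real^3. \<bar>deriv \<phi> (w \<bullet> e3)\<bar>)"
        by (rule continuous_on_rabs)
      then have "continuous_map euclidean euclidean (\<lambda>w::real^3. \<bar>deriv \<phi> (w \<bullet> e3)\<bar>)" by simp
      from continuous_map_compose[OF X_cont[OF S] this] show ?thesis
        by (simp add: o_def height_def)
    qed
    have "compact ((\<lambda>p. \<bar>deriv \<phi> (height X p)\<bar>) ` K)"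
      using image_compactin[OF assms(5) hc] by simp
    then obtain m where m: "m \<in> (\<lambda>p. \<bar>deriv \<phi> (height X p)\<bar>) ` K"
      and mle: "\<forall>y \<in> (\<lambda>p. \<bar>deriv \<phi> (height X p)\<bar>) ` K. m \<le> y"
      using compact_attains_inf False by blast
    have "m > 0" using m dphi_nz[OF ph] by auto
    show ?thesis
    proof (rule that[of "min \<xi> m"])
      show "min \<xi> m > 0" using \<open>m > 0\<close> assms(6) by simp
      fix p assume p: "p \<in> topspace M"
      show "\<bar>deriv \<phi> (height X p)\<bar> \<ge> min \<xi> m"
      proof (cases "p \<in> K")
        case True then show ?thesis using mle by force
      next
        case False then show ?thesis using assms(7) p by force
      qed
    qed
  qed
  define u where "u = (\<lambda>p. s * (X p \<bullet> v))"
  have C2: "C2_surface M X u"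
    unfolding C2_surface_def
  proof (intro allI impI)
    fix U \<psi> assume c: "is_chart M X U \<psi>"
    then have U: "open U" and "Ck_on 2 (X \<circ> \<psi>) U" unfolding is_chart_def smooth_on2_def by auto
    from Ck_lin[OF this, of s v] show "Ck_on 2 (u \<circ> \<psi>) U" by (simp add: u_def o_def)
  qed
  have bd: "bdd_above (u ` topspace M)" using H unfolding u_def s_def by (auto intro: bdd_aboveI)
  have "\<exists>p :: nat \<Rightarrow> 'a. \<forall>n\<ge>1. p n \<in> topspace M \<and>
            u (p n) > (SUP q\<in>topspace M. u q) - 1 / real n \<and>
            (\<forall>U \<psi> x. is_chart M X U \<psi> \<and> x \<in> U \<and> \<psi> x = p n \<longrightarrow> drift_lap \<phi> X \<psi> u x < 1 / real n)"
    using sc C2 bd unfolding phi_stoch_complete_def by blast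
  then obtain p :: "nat \<Rightarrow> 'a" where P: "\<forall>n\<ge>1. p n \<in> topspace M \<and>
            u (p n) > (SUP q\<in>topspace M. u q) - 1 / real n \<and>
            (\<forall>U \<psi> x. is_chart M X U \<psi> \<and> x \<in> U \<and> \<psi> x = p n \<longrightarrow> drift_lap \<phi> X \<psi> u x < 1 / real n)"
    by blast
  obtain n :: nat where n0: "n > 0" and nl: "inverse (real n) < c * (v \<bullet> e3)"
    using ex_inverse_of_nat_less[of "c * (v \<bullet> e3)"] c0 ve by auto
  have n1: "n \<ge> 1" using n0 by simp
  have pt: "p n \<in> topspace M" using P n1 by blast
  then obtain U \<psi> x where c: "is_chart M X U \<psi>" and x: "x \<in> U" and px: "\<psi> x = p n"
    using S unfolding immersed_surface_def by blast
  have "drift_lap \<phi> X \<psi> u x < 1 / real n" using P n1 c x px by blast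
  moreover have "drift_lap \<phi> X \<psi> u x = \<bar>deriv \<phi> (height X (p n))\<bar> * (e3 \<bullet> v)"
    unfolding u_def drift_val[OF ph S mn c x] sabs px ..
  moreover have "\<bar>deriv \<phi> (height X (p n))\<bar> * (e3 \<bullet> v) \<ge> c * (v \<bullet> e3)"
    using cb[OF pt] ve by (simp add: inner_commute mult_right_mono)
  ultimately show False using nl by (simp add: inverse_eq_divide)
qed

end
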